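(* Let $h$ be a line tree whose nodes each test a dimension distinct from their ancestors, with set of tested dimensions $d_h$, and let $x$ satisfy $h(x)=l_h$. Then for any $x'$ such that, for all $a\in d_h$, $x'_a\le x_a$ if $f_h(a)=\mathrm{prefix}$ and $x_a\le x'_a$ if $f_h(a)=\mathrm{suffix}$, we have $h(x')=l_h$.
   Context: A line tree is a decision tree (each internal node compares one coordinate with a threshold, each leaf carries a label in $\{0,1\}$) in which every internal node has at least one leaf child, and all leaves except the deepest carry the same label while the deepest leaf carries the opposite label; $l_h$ denotes the label of the deepest leaf. $d_h$ is the set of dimensions tested by nodes of $h$. For $a\in d_h$, $f_h(a)=\mathrm{prefix}$ if at the node testing $a$ the samples with $x_a$ below the threshold are directed toward the leaf labeled $l_h$, and $f_h(a)=\mathrm{suffix}$ if the samples with $x_a$ above the threshold are directed toward that leaf. *)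

theory Defs
  imports Main "HOL.Real"
begin

datatype dtree = Leaf bool | Node nat real dtree dtree

fun eval_tree :: "dtree \<Rightarrow> (nat \<Rightarrow> real) \<Rightarrow> bool" where
  "eval_tree (Leaf b) x = b"
| "eval_tree (Node a t L R) x = (if x a \<le> t then eval_tree L x else eval_tree R x)"

fun dims :: "dtree \<Rightarrow> nat set" where
  "dims (Leaf b) = {}"
| "dims (Node a t L R) = insert a (dims L \<union> dims R)"

fun labels :: "dtree \<Rightarrow> bool set" where
  "labels (Leaf b) = {b}"
| "labels (Node a t L R) = labels L \<union> labels R"

fun distinct_tests :: "dtree \<Rightarrow> bool" where
  "distinct_tests (Leaf b) = True"
| "distinct_tests (Node a t L R) =
     (a \<notin> dims L \<and> a \<notin> dims R \<and> distinct_tests L \<and> distinct_tests R)"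

fun is_leaf :: "dtree \<Rightarrow> bool" where
  "is_leaf (Leaf b) = True"
| "is_leaf (Node a t L R) = False"

text \<open>line_chain l h: h has at least one internal node, every internal node has a leaf
  child (so h is a chain), the deepest leaf carries label l and all other leaves carry
  the opposite label. At the bottom node both children are leaves (both deepest);
  exactly one of them carries l and is taken as "the deepest leaf".\<close>
fun line_chain :: "bool \<Rightarrow> dtree \<Rightarrow> bool" where
  "line_chain l (Leaf b) = False"
| "line_chain l (Node a t L R) =
     (if is_leaf L \<and> is_leaf R then labels L \<union> labels R = {True, False}
      else if is_leaf L then labels L = {\<not> l} \<and> line_chain l R
      else if is_leaf R then labels R = {\<not> l} \<and> line_chain l L
      else False)"

text \<open>line_tree l h: h is a line tree and l = l_h is the label of its deepest leaf.
  (A single leaf is the degenerate line tree whose only leaf is the deepest one.)\<close>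
definition line_tree :: "bool \<Rightarrow> dtree \<Rightarrow> bool" where
  "line_tree l h = (case h of Leaf b \<Rightarrow> b = l | Node a t L R \<Rightarrow> line_chain l h)"

datatype direction = Prefix | Suffix

text \<open>f_h(a): at the node testing a, Prefix if the below-threshold child leads to the
  leaf labeled l_h (the unique leaf with that label), otherwise Suffix.\<close>
fun fdir :: "bool \<Rightarrow> dtree \<Rightarrow> nat \<Rightarrow> direction option" where
  "fdir l (Leaf b) c = None"
| "fdir l (Node a t L R) c =
     (if c = a then Some (if l \<in> labels L then Prefix else Suffix)
      else (case fdir l L c of Some d \<Rightarrow> Some d | None \<Rightarrow> fdir l R c))"

end

theory Submission
  imports Defs
begin

lemma lc_label: "line_chain l h \<Longrightarrow> l \<in> labels h"
  by (induction h) (auto split: if_splits elim: is_leaf.elims)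

lemma fdir_leaf: "is_leaf L \<Longrightarrow> fdir l L c = None"
  by (cases L) auto

lemma main:
  "line_chain l h \<Longrightarrow> distinct_tests h \<Longrightarrow> eval_tree h x = l \<Longrightarrow>
   \<forall>a\<in>dims h. (fdir l h a = Some Prefix \<longrightarrow> x' a \<le> x a)
                    \<and> (fdir l h a = Some Suffix \<longrightarrow> x a \<le> x' a)
   \<Longrightarrow> eval_tree h x' = l"
proof (induction h)
  case (Leaf b)
  then show ?case by simp
next
  case (Node a t L R)
  have da: "fdir l (Node a t L R) a = Some (if l \<in> labels L then Prefix else Suffix)" by simp
  have ha: "(l \<in> labels L \<longrightarrow> x' a \<le> x a) \<and> (l \<notin> labels L \<longrightarrow> x a \<le> x' a)"
    using Node.prems(4) da by auto
  show ?case
  proof (cases "is_leaf L \<and> is_leaf R")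
    case True
    then obtain b1 b2 where L: "L = Leaf b1" and R: "R = Leaf b2"
      by (cases L; cases R) auto
    show ?thesis using Node.prems ha L R by (auto split: if_splits)
  next
    case False
    show ?thesis
    proof (cases "is_leaf L")
      case True
      then obtain b1 where L: "L = Leaf b1" by (cases L) auto
      have lc: "b1 = (\<not> l)" "line_chain l R" using Node.prems(1) False L by (auto split: if_splits)
      have xa: "\<not> x a \<le> t" using Node.prems(3) lc L by (auto split: if_splits)
      have xa': "\<not> x' a \<le> t" using ha lc L xa by auto
      have evR: "eval_tree R x = l" using Node.prems(3) xa by simp
      have hyp: "\<forall>c\<in>dims R. (fdir l R c = Some Prefix \<longrightarrow> x' c \<le> x c)
                    \<and> (fdir l R c = Some Suffix \<longrightarrow> x c \<le> x' c)"
      proof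
        fix c assume c: "c \<in> dims R"
        hence "c \<noteq> a" using Node.prems(2) by auto
        hence "fdir l (Node a t L R) c = fdir l R c" using L by simp
        thus "(fdir l R c = Some Prefix \<longrightarrow> x' c \<le> x c)
                    \<and> (fdir l R c = Some Suffix \<longrightarrow> x c \<le> x' c)"
          using Node.prems(4) c by auto
      qed
      have "eval_tree R x' = l" using Node.IH(2)[OF lc(2) _ evR hyp] Node.prems(2) by simp
      thus ?thesis using xa' by simp
    next
      case nL: False
      then have Rl: "is_leaf R" using Node.prems(1) by (auto split: if_splits)
      then obtain b2 where R: "R = Leaf b2" by (cases R) auto
      have lc: "b2 = (\<not> l)" "line_chain l L" using Node.prems(1) nL R by (auto split: if_splits)
      have xa: "x a \<le> t" using Node.prems(3) lc R by (auto split: if_splits)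
      have xa': "x' a \<le> t" using ha lc_label[OF lc(2)] xa by auto
      have evL: "eval_tree L x = l" using Node.prems(3) xa by simp
      have hyp: "\<forall>c\<in>dims L. (fdir l L c = Some Prefix \<longrightarrow> x' c \<le> x c)
                    \<and> (fdir l L c = Some Suffix \<longrightarrow> x c \<le> x' c)"
      proof
        fix c assume c: "c \<in> dims L"
        hence "c \<noteq> a" using Node.prems(2) by auto
        hence "fdir l (Node a t L R) c = fdir l L c" using R by (simp split: option.splits)
        thus "(fdir l L c = Some Prefix \<longrightarrow> x' c \<le> x c)
                    \<and> (fdir l L c = Some Suffix \<longrightarrow> x c \<le> x' c)"
          using Node.prems(4) c by auto
      qed
      have "eval_tree L x' = l" using Node.IH(1)[OF lc(2) _ evL hyp] Node.prems(2) by simp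
      thus ?thesis using xa' by simp
    qed
  qed
qed

theorem lemma22:
  fixes h :: dtree and l :: bool and x x' :: "nat \<Rightarrow> real"
  assumes "line_tree l h"
    and "distinct_tests h"
    and "eval_tree h x = l"
    and "\<forall>a\<in>dims h. (fdir l h a = Some Prefix \<longrightarrow> x' a \<le> x a)
                    \<and> (fdir l h a = Some Suffix \<longrightarrow> x a \<le> x' a)"
  shows "eval_tree h x' = l"
proof (cases h)
  case (Leaf b)
  then show ?thesis using assms(1) by (simp add: line_tree_def)
next
  case (Node a t L R)
  then have "line_chain l h" using assms(1) by (simp add: line_tree_def)
  then show ?thesis using main assms by blast
qed

end
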